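(* Let $a\in\mathbb{R}$, $b\in(a,\infty)$, $h\in\mathbb{N}$, $v_1,\dots,v_h,w_1,\dots,w_h\in(0,\infty)$, let $f,p\in C(\mathbb{R},\mathbb{R})$ satisfy for all $x\in\mathbb{R}$ that $p(x)\ge0$ and $p^{-1}((0,\infty))=(a,b)$, with $\mathcal{L}$ and $I_k^\theta$ as in the context. Let $\Theta\in C([0,\infty),\mathbb{R}^{h+1})$ satisfy for all $t\in[0,\infty)$ that $\Theta_t=\Theta_0-\int_0^t(\nabla\mathcal{L})(\Theta_s)\,\mathrm{d}s$, and let $k\in\{1,\dots,h\}$ satisfy $I_k^{\Theta_0}\neq\emptyset$. Then for all $t\in[0,\infty)$ it holds that $I_k^{\Theta_t}\neq\emptyset$.
   Context: Let $\mathfrak{c}(x)=\min\{\max\{x,0\},1\}$. For $\theta=(\theta_1,\dots,\theta_{h+1})\in\mathbb{R}^{h+1}$ and $i\in\{1,\dots,h\}$ let $\psi_i(\theta)=-[w_i]^{-1}\theta_i$, $I_i^\theta=(\psi_i(\theta),\psi_i(\theta)+[w_i]^{-1})\cap(a,b)$, $\mathcal{N}^\theta(x)=\theta_{h+1}+\sum_{i=1}^hv_i\mathfrak{c}(w_ix+\theta_i)$, and $\mathcal{L}(\theta)=\int_a^b(\mathcal{N}^\theta(x)-f(x))^2p(x)\,\mathrm{d}x$ ($\mathcal{L}$ is continuously differentiable). *)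

theory Defs
  imports "HOL-Analysis.Analysis"
begin

text \<open>Parameter vectors theta in R^(h+1) are represented as functions nat => real,
  with the relevant components indexed by 1..h+1.\<close>

definition clip :: "real \<Rightarrow> real" where
  "clip x = min (max x 0) 1"

definition psi :: "(nat \<Rightarrow> real) \<Rightarrow> (nat \<Rightarrow> real) \<Rightarrow> nat \<Rightarrow> real" where
  "psi w \<theta> i = - (1 / w i) * \<theta> i"

definition Iset :: "real \<Rightarrow> real \<Rightarrow> (nat \<Rightarrow> real) \<Rightarrow> (nat \<Rightarrow> real) \<Rightarrow> nat \<Rightarrow> real set" where
  "Iset a b w \<theta> i = {psi w \<theta> i <..< psi w \<theta> i + 1 / w i} \<inter> {a<..<b}"

definition realiz :: "nat \<Rightarrow> (nat \<Rightarrow> real) \<Rightarrow> (nat \<Rightarrow> real) \<Rightarrow> (nat \<Rightarrow> real) \<Rightarrow> real \<Rightarrow> real" where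
  "realiz h v w \<theta> x = \<theta> (h + 1) + (\<Sum>i = 1..h. v i * clip (w i * x + \<theta> i))"

definition risk :: "real \<Rightarrow> real \<Rightarrow> nat \<Rightarrow> (nat \<Rightarrow> real) \<Rightarrow> (nat \<Rightarrow> real)
    \<Rightarrow> (real \<Rightarrow> real) \<Rightarrow> (real \<Rightarrow> real) \<Rightarrow> (nat \<Rightarrow> real) \<Rightarrow> real" where
  "risk a b h v w f p \<theta> = integral {a..b} (\<lambda>x. (realiz h v w \<theta> x - f x)^2 * p x)"

definition grad :: "((nat \<Rightarrow> real) \<Rightarrow> real) \<Rightarrow> (nat \<Rightarrow> real) \<Rightarrow> nat \<Rightarrow> real" where
  "grad L \<theta> i = deriv (\<lambda>s. L (\<theta>(i := \<theta> i + s))) 0"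

end

theory Submission
  imports Defs
begin

definition ind :: "real \<Rightarrow> real \<Rightarrow> real \<Rightarrow> real" where
  "ind l u y = (if l \<le> y \<and> y \<le> u then 1 else 0)"

lemma ind_eq:
  assumes "w > 0"
  shows "ind l u (w*x+\<theta>) = (if x \<in> {(l-\<theta>)/w..(u-\<theta>)/w} then 1 else 0)"
  using assms by (auto simp: ind_def field_simps)

lemma ind_integrable:
  fixes g :: "real \<Rightarrow> real"
  assumes "continuous_on {a..b} g" "w > 0"
  shows "(\<lambda>x. g x * ind l u (w*x+\<theta>)) integrable_on {a..b}"
proof -
  have e: "(\<lambda>x. g x * ind l u (w*x+\<theta>)) = (\<lambda>x. if x \<in> {(l-\<theta>)/w..(u-\<theta>)/w} then g x else 0)"
    using ind_eq[OF assms(2)] by (auto simp: fun_eq_iff)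
  have "g integrable_on ({max a ((l-\<theta>)/w) .. min b ((u-\<theta>)/w)})"
    apply (rule integrable_continuous_real)
    using assms(1) by (rule continuous_on_subset) auto
  moreover have "{(l-\<theta>)/w..(u-\<theta>)/w} \<inter> {a..b} = {max a ((l-\<theta>)/w) .. min b ((u-\<theta>)/w)}" by auto
  ultimately show ?thesis unfolding e integrable_restrict_Int by metis
qed

lemma ind_integral:
  assumes "w > 0"
  shows "integral {a..b} (\<lambda>x. ind l u (w*x+\<theta>)) = (if max a ((l-\<theta>)/w) \<le> min b ((u-\<theta>)/w) then min b ((u-\<theta>)/w) - max a ((l-\<theta>)/w) else 0)"
proof -
  have e: "(\<lambda>x. ind l u (w*x+\<theta>)) = (\<lambda>x. if x \<in> {(l-\<theta>)/w..(u-\<theta>)/w} then 1 else 0)"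
    using ind_eq[OF assms] by (auto simp: fun_eq_iff)
  have "integral {a..b} (\<lambda>x. ind l u (w*x+\<theta>)) = integral ({(l-\<theta>)/w..(u-\<theta>)/w} \<inter> {a..b}) (\<lambda>x. 1::real)"
    unfolding e integral_restrict_Int ..
  also have "{(l-\<theta>)/w..(u-\<theta>)/w} \<inter> {a..b} = {max a ((l-\<theta>)/w) .. min b ((u-\<theta>)/w)}" by auto
  finally show ?thesis by simp
qed

lemma ind_integral_le:
  assumes "w > 0" "l \<le> u"
  shows "integral {a..b} (\<lambda>x. ind l u (w*x+\<theta>)) \<le> (u - l)/w"
proof -
  have "min b ((u-\<theta>)/w) - max a ((l-\<theta>)/w) \<le> (u-\<theta>)/w - (l-\<theta>)/w" by linarith
  also have "\<dots> = (u-l)/w" by (simp add: diff_divide_distrib)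
  finally show ?thesis unfolding ind_integral[OF assms(1)] using assms by auto
qed

lemma clip_bounds: "0 \<le> clip x" "clip x \<le> 1" "\<bar>clip x - clip y\<bar> \<le> \<bar>x - y\<bar>"
  by (auto simp: clip_def)

lemma clip_cont: "continuous_on S clip"
  unfolding clip_def by (intro continuous_intros)

lemma clip_err:
  "\<bar>clip (y+s) - clip y - s * ind 0 1 y\<bar> \<le> 2*\<bar>s\<bar> * (ind (-\<bar>s\<bar>) \<bar>s\<bar> y + ind (1-\<bar>s\<bar>) (1+\<bar>s\<bar>) y)"
  by (auto simp: clip_def ind_def abs_if min_def max_def)

lemma deriv_quad:
  fixes \<Phi> :: "real \<Rightarrow> real"
  assumes "\<delta> > 0" "\<And>s. \<bar>s\<bar> \<le> \<delta> \<Longrightarrow> \<bar>\<Phi> s - \<Phi> 0 - s*D\<bar> \<le> K*(s^2)"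
  shows "(\<Phi> has_real_derivative D) (at 0)"
  unfolding has_field_derivative_iff LIM_eq
proof (intro allI impI)
  fix r :: real assume r: "r > 0"
  define e where "e = min \<delta> (r/(\<bar>K\<bar>+1))"
  have e: "e > 0" using r assms(1) by (simp add: e_def)
  show "\<exists>s>0. \<forall>x. x \<noteq> 0 \<and> norm (x - 0) < s \<longrightarrow> norm ((\<Phi> x - \<Phi> 0) / (x - 0) - D) < r"
  proof (intro exI[of _ e] conjI allI impI e)
    fix x :: real assume x: "x \<noteq> 0 \<and> norm (x - 0) < e"
    then have x0: "\<bar>x\<bar> > 0" "\<bar>x\<bar> \<le> \<delta>" "\<bar>x\<bar> < r/(\<bar>K\<bar>+1)" by (auto simp: e_def)
    have "(\<Phi> x - \<Phi> 0) / x - D = (\<Phi> x - \<Phi> 0 - x*D)/x" using x by (simp add: field_simps)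
    then have "\<bar>(\<Phi> x - \<Phi> 0) / x - D\<bar> = \<bar>\<Phi> x - \<Phi> 0 - x*D\<bar> / \<bar>x\<bar>" by (simp add: abs_divide)
    also have "\<dots> \<le> K*x^2/\<bar>x\<bar>" using assms(2)[OF x0(2)] x0(1) by (simp add: divide_right_mono)
    also have "\<dots> = K*\<bar>x\<bar>"
    proof -
      have "x^2 = \<bar>x\<bar>*\<bar>x\<bar>" by (metis abs_mult_self_eq power2_eq_square)
      then show ?thesis using x0(1) by (simp only:) (simp add: field_simps)
    qed
    also have "\<dots> \<le> \<bar>K\<bar>*\<bar>x\<bar>" by (simp add: mult_right_mono)
    also have "\<dots> < r"
    proof -
      have "(\<bar>K\<bar>+1)*\<bar>x\<bar> < r" using x0(3) by (simp add: field_simps)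
      moreover have "\<bar>K\<bar>*\<bar>x\<bar> \<le> (\<bar>K\<bar>+1)*\<bar>x\<bar>" by (intro mult_right_mono) auto
      ultimately show ?thesis by linarith
    qed
    finally show "norm ((\<Phi> x - \<Phi> 0) / (x - 0) - D) < r" by simp
  qed
qed

lemma cont_bound:
  fixes g :: "real \<Rightarrow> real"
  assumes "continuous_on {a..b} g"
  obtains M where "M \<ge> 0" "\<And>x. x \<in> {a..b} \<Longrightarrow> \<bar>g x\<bar> \<le> M"
proof -
  have "compact (g ` {a..b})" using assms compact_continuous_image by blast
  then obtain M where "\<forall>y\<in>g ` {a..b}. norm y \<le> M" using compact_imp_bounded bounded_iff by metis
  then have "\<And>x. x \<in> {a..b} \<Longrightarrow> \<bar>g x\<bar> \<le> max M 0" by force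
  then show ?thesis using that[of "max M 0"] by simp
qed

lemma pointwise_err:
  fixes A G v c0 c1 s e :: real
  assumes "\<bar>A + v * c0\<bar> \<le> MC" "\<bar>G\<bar> \<le> MG" "\<bar>c1 - c0\<bar> \<le> \<bar>s\<bar>"
    "\<bar>c1 - c0 - s * i\<bar> \<le> E"
  shows "\<bar>(A + v * c1)^2 * G - (A + v * c0)^2 * G - s * (2 * (A + v * c0) * v * G * i)\<bar>
         \<le> 2 * MC * \<bar>v\<bar> * MG * E + v^2 * s^2 * MG"
proof -
  have eq: "(A + v * c1)^2 * G - (A + v * c0)^2 * G - s * (2 * (A + v * c0) * v * G * i)
      = 2 * (A + v * c0) * v * G * (c1 - c0 - s * i) + v^2 * (c1-c0)^2 * G"
    by (simp add: algebra_simps power2_eq_square)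
  have MC: "MC \<ge> 0" "MG \<ge> 0" using assms(1,2) by linarith+
  have 1: "\<bar>2 * (A + v * c0) * v * G * (c1 - c0 - s * i)\<bar> \<le> 2 * MC * \<bar>v\<bar> * MG * E"
  proof -
    have "\<bar>2 * (A + v * c0) * v * G * (c1 - c0 - s * i)\<bar> = 2 * \<bar>A + v * c0\<bar> * \<bar>v\<bar> * \<bar>G\<bar> * \<bar>c1 - c0 - s * i\<bar>"
      by (simp only: abs_mult abs_numeral)
    also have "\<dots> \<le> 2 * MC * \<bar>v\<bar> * MG * E"
      by (intro mult_mono assms mult_nonneg_nonneg MC) auto
    finally show ?thesis .
  qed
  have 2: "\<bar>v^2 * (c1-c0)^2 * G\<bar> \<le> v^2 * s^2 * MG"
  proof -
    have "\<bar>v^2 * (c1-c0)^2 * G\<bar> = v^2 * (c1-c0)^2 * \<bar>G\<bar>" by (simp add: abs_mult)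
    also have "\<dots> \<le> v^2 * s^2 * MG"
      apply (intro mult_mono assms mult_nonneg_nonneg MC)
      using assms(3) by (auto simp: power2_le_iff_abs_le abs_le_square_iff)
    finally show ?thesis .
  qed
  show ?thesis unfolding eq using 1 2 by linarith
qed

lemma deriv_int:
  fixes A G :: "real \<Rightarrow> real" and v w \<theta> :: real
  assumes cA: "continuous_on {a..b} A" and cG: "continuous_on {a..b} G" and w: "w > 0" and ab: "a \<le> b"
  shows "((\<lambda>s. integral {a..b} (\<lambda>x. (A x + v * clip (w * x + \<theta> + s))^2 * G x)) has_real_derivative
     integral {a..b} (\<lambda>x. 2 * (A x + v * clip (w * x + \<theta>)) * v * G x * ind 0 1 (w * x + \<theta>))) (at 0)"
proof -
  obtain MA where MA: "MA \<ge> 0" "\<And>x. x \<in> {a..b} \<Longrightarrow> \<bar>A x\<bar> \<le> MA" using cont_bound[OF cA] by blast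
  obtain MG where MG: "MG \<ge> 0" "\<And>x. x \<in> {a..b} \<Longrightarrow> \<bar>G x\<bar> \<le> MG" using cont_bound[OF cG] by blast
  define MC where "MC = MA + \<bar>v\<bar>"
  have MCb: "\<bar>A x + v * c\<bar> \<le> MC" if "x \<in> {a..b}" "0 \<le> c" "c \<le> 1" for x c
  proof -
    have "\<bar>v * c\<bar> \<le> \<bar>v\<bar>" using that by (simp add: abs_mult mult_left_le)
    then show ?thesis using MA(2)[OF that(1)] unfolding MC_def by linarith
  qed
  have MC0: "MC \<ge> 0" unfolding MC_def using MA by simp
  define Q where "Q = (\<lambda>s x. (A x + v * clip (w * x + \<theta> + s))^2 * G x)"
  define P where "P = (\<lambda>x. 2 * (A x + v * clip (w * x + \<theta>)) * v * G x)"
  define D where "D = integral {a..b} (\<lambda>x. P x * ind 0 1 (w * x + \<theta>))"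
  define \<Phi> where "\<Phi> = (\<lambda>s. integral {a..b} (Q s))"
  define K where "K = 16 * MC * \<bar>v\<bar> * MG / w + v^2 * MG * (b - a)"
  have cc: "continuous_on S (\<lambda>x. clip (w * x + \<theta> + s))" for S s
    unfolding clip_def by (intro continuous_intros)
  have intQ: "Q s integrable_on {a..b}" for s
    unfolding Q_def by (intro integrable_continuous_real continuous_intros cA cG cc)
  have cP: "continuous_on {a..b} P"
    using cc[of _ 0] unfolding P_def by (intro continuous_intros cA cG) simp
  have intP: "(\<lambda>x. P x * ind 0 1 (w * x + \<theta>)) integrable_on {a..b}"
    by (rule ind_integrable[OF cP w])
  have Q0: "Q 0 = (\<lambda>x. (A x + v * clip (w * x + \<theta>))^2 * G x)" unfolding Q_def by simp
  have main: "\<bar>\<Phi> s - \<Phi> 0 - s * D\<bar> \<le> K * (s^2)" if s: "\<bar>s\<bar> \<le> 1" for s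
  proof -
    define C1 where "C1 = 4 * MC * \<bar>v\<bar> * MG * \<bar>s\<bar>"
    define C2 where "C2 = v^2 * s^2 * MG"
    define B where "B = (\<lambda>x. C1 * ind (-\<bar>s\<bar>) \<bar>s\<bar> (w * x + \<theta>) + C1 * ind (1-\<bar>s\<bar>) (1+\<bar>s\<bar>) (w * x + \<theta>) + C2)"
    define E where "E = (\<lambda>x. Q s x - Q 0 x - s * (P x * ind 0 1 (w * x + \<theta>)))"
    have i1: "(\<lambda>x. C1 * ind l u (w * x + \<theta>)) integrable_on {a..b}" for l u
      using ind_integrable[of a b "\<lambda>x. C1", OF _ w] by simp
    have i2: "(\<lambda>x. ind l u (w * x + \<theta>)) integrable_on {a..b}" for l u
      using ind_integrable[of a b "\<lambda>x. 1", OF _ w] by simp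
    have intB: "B integrable_on {a..b}"
      unfolding B_def by (intro integrable_add i1 integrable_const_ivl)
    have intE: "E integrable_on {a..b}"
      unfolding E_def by (intro integrable_diff intQ integrable_on_mult_right intP)
    have eqE: "\<Phi> s - \<Phi> 0 - s * D = integral {a..b} E"
      unfolding E_def \<Phi>_def D_def
      by (simp add: integral_diff integrable_diff intQ intP integrable_on_mult_right)
    have intBv: "integral {a..b} B = C1 * integral {a..b} (\<lambda>x. ind (-\<bar>s\<bar>) \<bar>s\<bar> (w * x + \<theta>))
        + C1 * integral {a..b} (\<lambda>x. ind (1-\<bar>s\<bar>) (1+\<bar>s\<bar>) (w * x + \<theta>)) + C2 * (b - a)"
    proof -
      have "integral {a..b} B = integral {a..b} (\<lambda>x. C1 * ind (-\<bar>s\<bar>) \<bar>s\<bar> (w * x + \<theta>) + C1 * ind (1-\<bar>s\<bar>) (1+\<bar>s\<bar>) (w * x + \<theta>)) + integral {a..b} (\<lambda>x. C2)"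
        unfolding B_def by (rule integral_add) (intro integrable_add i1, rule integrable_const_ivl)
      also have "integral {a..b} (\<lambda>x. C1 * ind (-\<bar>s\<bar>) \<bar>s\<bar> (w * x + \<theta>) + C1 * ind (1-\<bar>s\<bar>) (1+\<bar>s\<bar>) (w * x + \<theta>))
          = integral {a..b} (\<lambda>x. C1 * ind (-\<bar>s\<bar>) \<bar>s\<bar> (w * x + \<theta>)) + integral {a..b} (\<lambda>x. C1 * ind (1-\<bar>s\<bar>) (1+\<bar>s\<bar>) (w * x + \<theta>))"
        by (rule integral_add) (rule i1)+
      finally show ?thesis using ab by simp
    qed
    have I1: "integral {a..b} (\<lambda>x. ind (-\<bar>s\<bar>) \<bar>s\<bar> (w * x + \<theta>)) \<le> 2 * \<bar>s\<bar> / w"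
      using ind_integral_le[OF w, of "-\<bar>s\<bar>" "\<bar>s\<bar>" a b \<theta>] by simp
    have I2: "integral {a..b} (\<lambda>x. ind (1-\<bar>s\<bar>) (1+\<bar>s\<bar>) (w * x + \<theta>)) \<le> 2 * \<bar>s\<bar> / w"
      using ind_integral_le[OF w, of "1-\<bar>s\<bar>" "1+\<bar>s\<bar>" a b \<theta>] by simp
    have C1: "C1 \<ge> 0" unfolding C1_def using MC0 MG by simp
    have "integral {a..b} B \<le> C1 * (2 * \<bar>s\<bar> / w) + C1 * (2 * \<bar>s\<bar> / w) + C2 * (b - a)"
      unfolding intBv using I1 I2 C1 by (intro add_mono[OF add_mono[OF mult_left_mono mult_left_mono] order_refl]) auto
    also have "\<dots> = K * (s^2)"
      unfolding C1_def C2_def K_def using w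
      by (simp add: field_simps power2_eq_square abs_mult_self_eq)
    finally have Bb: "integral {a..b} B \<le> K * (s^2)" .
    have pw: "\<bar>E x\<bar> \<le> B x" if x: "x \<in> {a..b}" for x
    proof -
      have "\<bar>E x\<bar> \<le> 2 * MC * \<bar>v\<bar> * MG * (2 * \<bar>s\<bar> * (ind (-\<bar>s\<bar>) \<bar>s\<bar> (w * x + \<theta>) + ind (1-\<bar>s\<bar>) (1+\<bar>s\<bar>) (w * x + \<theta>))) + v^2 * s^2 * MG"
      proof -
        have c3: "\<bar>clip (w * x + \<theta> + s) - clip (w * x + \<theta>)\<bar> \<le> \<bar>s\<bar>"
          using clip_bounds(3)[of "w * x + \<theta> + s" "w * x + \<theta>"] by simp
        show ?thesis
        using pointwise_err[OF MCb[OF x clip_bounds(1,2)] MG(2)[OF x] c3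
          clip_err[of "w * x + \<theta>" s]] by (simp add: E_def Q_def P_def)
      qed
      also have "\<dots> = B x" unfolding B_def C1_def C2_def by (simp add: algebra_simps)
      finally show ?thesis .
    qed
    have "\<bar>integral {a..b} E\<bar> \<le> integral {a..b} B"
      using integral_norm_bound_integral[OF intE intB] pw by simp
    then show ?thesis using eqE Bb by simp
  qed
  have "(\<Phi> has_real_derivative D) (at 0)"
    by (rule deriv_quad[of 1]) (use main in auto)
  then show ?thesis unfolding \<Phi>_def D_def Q_def P_def .
qed

lemma realiz_upd:
  assumes "k \<in> {1..h}"
  shows "realiz h v w (\<theta>(k := \<theta> k + s)) x =
    (\<theta> (h+1) + (\<Sum>i\<in>{1..h}-{k}. v i * clip (w i * x + \<theta> i))) + v k * clip (w k * x + \<theta> k + s)"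
proof -
  have hk: "h + 1 \<noteq> k" using assms by auto
  have "(\<Sum>i = 1..h. v i * clip (w i * x + (\<theta>(k := \<theta> k + s)) i))
      = v k * clip (w k * x + (\<theta>(k := \<theta> k + s)) k) + (\<Sum>i\<in>{1..h}-{k}. v i * clip (w i * x + (\<theta>(k := \<theta> k + s)) i))"
    using assms by (subst sum.remove[of _ k]) auto
  also have "(\<Sum>i\<in>{1..h}-{k}. v i * clip (w i * x + (\<theta>(k := \<theta> k + s)) i)) = (\<Sum>i\<in>{1..h}-{k}. v i * clip (w i * x + \<theta> i))"
    by (rule sum.cong) auto
  finally show ?thesis using hk unfolding realiz_def by (simp add: add.assoc)
qed

lemma grad_formula:
  assumes ab: "a < b" and vw: "\<forall>i\<in>{1..h}. v i > 0 \<and> w i > 0"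
    and cf: "continuous_on UNIV f" and cp: "continuous_on UNIV p" and k: "k \<in> {1..h}"
  shows "grad (risk a b h v w f p) \<theta> k = integral {a..b} (\<lambda>x. 2 * (realiz h v w \<theta> x - f x) * v k * p x * ind 0 1 (w k * x + \<theta> k))"
proof -
  define A where "A = (\<lambda>x. \<theta> (h+1) + (\<Sum>i\<in>{1..h}-{k}. v i * clip (w i * x + \<theta> i)) - f x)"
  have eq: "realiz h v w (\<theta>(k := \<theta> k + s)) x - f x = A x + v k * clip (w k * x + \<theta> k + s)" for s x
    unfolding A_def realiz_upd[OF k] by simp
  have eq0: "realiz h v w \<theta> x - f x = A x + v k * clip (w k * x + \<theta> k)" for x
    using eq[of 0 x] by simp
  have cA: "continuous_on {a..b} A"
    unfolding A_def clip_def
    by (intro continuous_intros continuous_on_subset[OF cf]) auto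
  have cG: "continuous_on {a..b} p" using continuous_on_subset[OF cp] by blast
  have wk: "w k > 0" using vw k by auto
  have "((\<lambda>s. risk a b h v w f p (\<theta>(k := \<theta> k + s))) has_real_derivative
     integral {a..b} (\<lambda>x. 2 * (A x + v k * clip (w k * x + \<theta> k)) * v k * p x * ind 0 1 (w k * x + \<theta> k))) (at 0)"
    unfolding risk_def eq using deriv_int[OF cA cG wk, of "v k" "\<theta> k"] ab by simp
  then show ?thesis unfolding grad_def eq0 by (rule DERIV_imp_deriv)
qed

lemma ind_01: "0 \<le> ind l u y" "ind l u y \<le> 1"
  by (auto simp: ind_def)

lemma grad_bound:
  assumes ab: "a < b" and vw: "\<forall>i\<in>{1..h}. v i > 0 \<and> w i > 0"
    and cf: "continuous_on UNIV f" and cp: "continuous_on UNIV p" and k: "k \<in> {1..h}"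
    and M: "\<forall>x\<in>{a..b}. \<bar>(realiz h v w \<theta> x - f x) * p x\<bar> \<le> M"
  shows "\<bar>grad (risk a b h v w f p) \<theta> k\<bar> \<le> 2 * v k * M * max 0 ((\<theta> k + w k * b) / w k)"
    and "\<bar>grad (risk a b h v w f p) \<theta> k\<bar> \<le> 2 * v k * M * max 0 ((1 - w k * a - \<theta> k) / w k)"
proof -
  have wk: "w k > 0" and vk: "v k > 0" using vw k by auto
  have M0: "M \<ge> 0" using M ab by (meson abs_ge_zero atLeastAtMost_iff less_imp_le order_refl order_trans)
  have cR: "continuous_on {a..b} (\<lambda>x. 2 * (realiz h v w \<theta> x - f x) * v k * p x)"
    unfolding realiz_def clip_def
    by (intro continuous_intros continuous_on_subset[OF cf] continuous_on_subset[OF cp]) auto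
  have i1: "(\<lambda>x. 2 * (realiz h v w \<theta> x - f x) * v k * p x * ind 0 1 (w k * x + \<theta> k)) integrable_on {a..b}"
    using ind_integrable[OF cR wk] by simp
  have i2: "(\<lambda>x. (2 * v k * M) * ind 0 1 (w k * x + \<theta> k)) integrable_on {a..b}"
    using ind_integrable[of a b "\<lambda>x. 2 * v k * M", OF _ wk] by simp
  have pw: "\<bar>2 * (realiz h v w \<theta> x - f x) * v k * p x * ind 0 1 (w k * x + \<theta> k)\<bar> \<le> (2 * v k * M) * ind 0 1 (w k * x + \<theta> k)"
    if x: "x \<in> {a..b}" for x
  proof -
    have "\<bar>2 * (realiz h v w \<theta> x - f x) * v k * p x * ind 0 1 (w k * x + \<theta> k)\<bar>
        = (2 * v k) * \<bar>(realiz h v w \<theta> x - f x) * p x\<bar> * ind 0 1 (w k * x + \<theta> k)"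
      using vk ind_01[of 0 1 "w k * x + \<theta> k"] by (simp only: abs_mult abs_numeral) (simp add: ac_simps)
    also have "\<dots> \<le> (2 * v k) * M * ind 0 1 (w k * x + \<theta> k)"
      using M x vk ind_01[of 0 1 "w k * x + \<theta> k"] by (intro mult_right_mono mult_left_mono) auto
    finally show ?thesis by simp
  qed
  have "\<bar>grad (risk a b h v w f p) \<theta> k\<bar> \<le> integral {a..b} (\<lambda>x. (2 * v k * M) * ind 0 1 (w k * x + \<theta> k))"
    unfolding grad_formula[OF ab vw cf cp k]
    using integral_norm_bound_integral[OF i1 i2] pw by simp
  also have "\<dots> = (2 * v k * M) * integral {a..b} (\<lambda>x. ind 0 1 (w k * x + \<theta> k))" by simp
  finally have G: "\<bar>grad (risk a b h v w f p) \<theta> k\<bar> \<le> (2 * v k * M) * integral {a..b} (\<lambda>x. ind 0 1 (w k * x + \<theta> k))" .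
  have c0: "2 * v k * M \<ge> 0" using vk M0 by simp
  have e1: "(\<theta> k + w k * b) / w k = b - (0 - \<theta> k) / w k" using wk by (simp add: field_simps)
  have e2: "(1 - w k * a - \<theta> k) / w k = (1 - \<theta> k) / w k - a" using wk by (simp add: field_simps)
  have I1: "integral {a..b} (\<lambda>x. ind 0 1 (w k * x + \<theta> k)) \<le> max 0 ((\<theta> k + w k * b) / w k)"
    unfolding ind_integral[OF wk] e1 by auto
  have I2: "integral {a..b} (\<lambda>x. ind 0 1 (w k * x + \<theta> k)) \<le> max 0 ((1 - w k * a - \<theta> k) / w k)"
    unfolding ind_integral[OF wk] e2 by auto
  show "\<bar>grad (risk a b h v w f p) \<theta> k\<bar> \<le> 2 * v k * M * max 0 ((\<theta> k + w k * b) / w k)"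
    using G mult_left_mono[OF I1 c0] by linarith
  show "\<bar>grad (risk a b h v w f p) \<theta> k\<bar> \<le> 2 * v k * M * max 0 ((1 - w k * a - \<theta> k) / w k)"
    using G mult_left_mono[OF I2 c0] by linarith
qed

lemma gronwall_contra:
  fixes d G :: "real \<Rightarrow> real"
  assumes t1: "t1 > 0" and K: "K > 0"
    and cd: "continuous_on {0..t1} d"
    and pos: "\<forall>t\<in>{0..<t1}. d t > 0" and dend: "d t1 \<le> 0"
    and intG: "G integrable_on {0..t1}"
    and dif: "\<forall>\<tau>\<in>{0..t1}. d \<tau> - d t1 \<le> integral {\<tau>..t1} G"
    and Gb: "\<forall>s\<in>{0..t1}. G s \<le> K * max 0 (d s)"
  shows False
proof -
  define \<tau>0 where "\<tau>0 = max 0 (t1 - 1/(2*K))"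
  have \<tau>0: "0 \<le> \<tau>0" "\<tau>0 < t1" "t1 - \<tau>0 \<le> 1/(2*K)" using t1 K by (auto simp: \<tau>0_def)
  have cdm: "continuous_on {\<tau>0..t1} (\<lambda>t. max 0 (d t))"
    by (intro continuous_intros continuous_on_subset[OF cd]) (use \<tau>0 in auto)
  obtain \<tau> where \<tau>: "\<tau> \<in> {\<tau>0..t1}" and mx: "\<forall>y\<in>{\<tau>0..t1}. max 0 (d y) \<le> max 0 (d \<tau>)"
    using continuous_attains_sup[OF compact_Icc _ cdm] \<tau>0 by fastforce
  have "d \<tau>0 > 0" using pos \<tau>0 by auto
  then have "max 0 (d \<tau>) > 0" using mx[rule_format, of \<tau>0] \<tau>0 by auto
  then have dt: "d \<tau> > 0" by linarith
  then have "\<tau> \<noteq> t1" using dend by auto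
  have tin: "\<tau> \<in> {0..t1}" using \<tau> \<tau>0 by auto
  have intG': "G integrable_on {\<tau>..t1}"
    by (rule integrable_subinterval_real[OF intG]) (use tin in auto)
  have "integral {\<tau>..t1} G \<le> integral {\<tau>..t1} (\<lambda>_. K * d \<tau>)"
  proof (rule integral_le[OF intG' integrable_const_ivl])
    fix s assume s: "s \<in> {\<tau>..t1}"
    then have "max 0 (d s) \<le> max 0 (d \<tau>)" using mx \<tau> by auto
    then have "K * max 0 (d s) \<le> K * d \<tau>" using dt K by (simp add: mult_left_mono)
    moreover have "s \<in> {0..t1}" using s tin by auto
    ultimately show "G s \<le> K * d \<tau>" using Gb by force
  qed
  also have "\<dots> = K * d \<tau> * (t1 - \<tau>)" using tin by simp
  also have "\<dots> \<le> K * d \<tau> * (1/(2*K))"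
    using \<tau> \<tau>0 K dt by (intro mult_left_mono) auto
  also have "\<dots> = d \<tau> / 2" using K by simp
  finally have "integral {\<tau>..t1} G \<le> d \<tau> / 2" .
  moreover have "d \<tau> - d t1 \<le> integral {\<tau>..t1} G" using dif tin by auto
  ultimately show False using dt dend by linarith
qed

lemma Iset_iff:
  assumes "a < b" "w k > 0"
  shows "Iset a b w \<theta> k \<noteq> {} \<longleftrightarrow> - w k * b < \<theta> k \<and> \<theta> k < 1 - w k * a"
proof -
  define q where "q = psi w \<theta> k"
  have q: "q = - \<theta> k / w k" unfolding q_def psi_def by simp
  have "Iset a b w \<theta> k \<noteq> {} \<longleftrightarrow> q < b \<and> a < q + 1 / w k"
  proof
    assume "Iset a b w \<theta> k \<noteq> {}"
    then obtain x where "x \<in> Iset a b w \<theta> k" by blast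
    then show "q < b \<and> a < q + 1 / w k" unfolding Iset_def q_def by auto
  next
    assume h: "q < b \<and> a < q + 1 / w k"
    define x where "x = (max q a + min (q + 1 / w k) b) / 2"
    have "x \<in> Iset a b w \<theta> k" unfolding Iset_def q_def[symmetric] x_def
      using h assms by (auto simp: max_def min_def)
    then show "Iset a b w \<theta> k \<noteq> {}" by blast
  qed
  also have "q < b \<longleftrightarrow> - w k * b < \<theta> k" unfolding q using assms(2)
    by (simp add: field_simps) linarith
  also have "a < q + 1 / w k \<longleftrightarrow> \<theta> k < 1 - w k * a" unfolding q using assms(2)
    by (simp add: field_simps)
  finally show ?thesis .
qed

theorem lemma2p22:
  fixes a b :: real and h k :: nat and v w :: "nat \<Rightarrow> real"
    and f p :: "real \<Rightarrow> real" and \<Theta> :: "real \<Rightarrow> nat \<Rightarrow> real"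
  assumes "a < b"
    and "\<forall>i\<in>{1..h}. v i > 0 \<and> w i > 0"
    and "continuous_on UNIV f" and "continuous_on UNIV p"
    and "\<forall>x. p x \<ge> 0" and "{x. p x > 0} = {a<..<b}"
    and "\<forall>i\<in>{1..h+1}. continuous_on {0..} (\<lambda>t. \<Theta> t i)"
    and "\<forall>t\<ge>0. \<forall>i\<in>{1..h+1}.
           ((\<lambda>s. grad (risk a b h v w f p) (\<Theta> s) i) has_integral (\<Theta> 0 i - \<Theta> t i)) {0..t}"
    and "k \<in> {1..h}"
    and "Iset a b w (\<Theta> 0) k \<noteq> {}"
  shows "\<forall>t\<ge>0. Iset a b w (\<Theta> t) k \<noteq> {}"
proof (intro allI impI, rule ccontr)
  note ab = assms(1) and vw = assms(2) and cf = assms(3) and cp = assms(4)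
  note k = assms(9)
  fix T :: real assume T: "T \<ge> 0" and bad: "\<not> Iset a b w (\<Theta> T) k \<noteq> {}"
  have wk: "w k > 0" and vk: "v k > 0" using vw k by auto
  define lo where "lo = - w k * b"
  define hi where "hi = 1 - w k * a"
  define z where "z = (\<lambda>t. \<Theta> t k)"
  define g where "g = (\<lambda>s. grad (risk a b h v w f p) (\<Theta> s) k)"
  have inJ: "Iset a b w (\<Theta> t) k \<noteq> {} \<longleftrightarrow> lo < z t \<and> z t < hi" for t
    unfolding lo_def hi_def z_def using Iset_iff[of a b w k "\<Theta> t", OF ab wk] .
  have z0: "lo < z 0 \<and> z 0 < hi" using assms(10) inJ by blast
  have zT: "\<not> (lo < z T \<and> z T < hi)" using bad inJ by blast
  have cz: "continuous_on {0..} z" unfolding z_def using assms(7) k by auto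
  have gi: "(g has_integral (z 0 - z t)) {0..t}" if "t \<ge> 0" for t
    unfolding g_def z_def using assms(8) k that by auto
  define S where "S = {0..T} \<inter> z -` ({..lo} \<union> {hi..})"
  have "closed S" unfolding S_def
    by (rule continuous_closed_preimage) (use continuous_on_subset[OF cz] in auto)
  have "T \<in> S" unfolding S_def using T zT by auto
  define t1 where "t1 = Inf S"
  have "bdd_below S" unfolding S_def by (rule bdd_belowI[of _ 0]) auto
  then have t1S: "t1 \<in> S" unfolding t1_def using closed_contains_Inf \<open>closed S\<close> \<open>T \<in> S\<close> by blast
  have before: "lo < z t \<and> z t < hi" if "0 \<le> t" "t < t1" for t
  proof (rule ccontr)
    assume "\<not> (lo < z t \<and> z t < hi)"
    moreover have "t \<le> T" using t1S that unfolding S_def by auto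
    ultimately have "t \<in> S" unfolding S_def using that by auto
    then have "t1 \<le> t" unfolding t1_def using \<open>bdd_below S\<close> by (rule cInf_lower)
    then show False using that by auto
  qed
  have t1pos: "t1 > 0"
  proof -
    have "t1 \<ge> 0" using t1S unfolding S_def by auto
    moreover have "t1 \<noteq> 0" using t1S z0 unfolding S_def by auto
    ultimately show ?thesis by auto
  qed
  have t1out: "z t1 \<le> lo \<or> z t1 \<ge> hi" using t1S unfolding S_def by auto
  have cth: "continuous_on {0..t1} (\<lambda>t. \<Theta> t (h+1))"
    using assms(7) by (intro continuous_on_subset[of "{0..}" _ "{0..t1}"]) auto
  obtain Bt where Bt: "Bt \<ge> 0" "\<And>t. t \<in> {0..t1} \<Longrightarrow> \<bar>\<Theta> t (h+1)\<bar> \<le> Bt"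
    using cont_bound[OF cth] by blast
  obtain F where F: "F \<ge> 0" "\<And>x. x \<in> {a..b} \<Longrightarrow> \<bar>f x\<bar> \<le> F"
    using cont_bound[OF continuous_on_subset[OF cf]] by blast
  obtain P where P: "P \<ge> 0" "\<And>x. x \<in> {a..b} \<Longrightarrow> \<bar>p x\<bar> \<le> P"
    using cont_bound[OF continuous_on_subset[OF cp]] by blast
  define V where "V = (\<Sum>i = 1..h. v i)"
  define M where "M = (Bt + V + F) * P + 1"
  have V0: "V \<ge> 0" unfolding V_def using vw by (intro sum_nonneg) (meson atLeastAtMost_iff less_imp_le)
  have M0: "M > 0" proof -
    have "(Bt + V + F) * P \<ge> 0" using Bt(1) F(1) P(1) V0 by simp
    then show ?thesis unfolding M_def by linarith
  qed
  have Mb: "\<forall>x\<in>{a..b}. \<bar>(realiz h v w (\<Theta> t) x - f x) * p x\<bar> \<le> M" if t: "t \<in> {0..t1}" for t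
  proof
    fix x assume x: "x \<in> {a..b}"
    have "\<bar>(\<Sum>i = 1..h. v i * clip (w i * x + \<Theta> t i))\<bar> \<le> (\<Sum>i = 1..h. \<bar>v i * clip (w i * x + \<Theta> t i)\<bar>)"
      by (rule sum_abs)
    also have "\<dots> \<le> V" unfolding V_def
    proof (rule sum_mono)
      fix i assume "i \<in> {1..h}"
      then have "v i > 0" using vw by auto
      then show "\<bar>v i * clip (w i * x + \<Theta> t i)\<bar> \<le> v i"
        using clip_bounds(1,2)[of "w i * x + \<Theta> t i"] by (simp add: abs_mult mult_left_le)
    qed
    finally have "\<bar>realiz h v w (\<Theta> t) x\<bar> \<le> Bt + V"
      unfolding realiz_def using Bt(2)[OF t] by linarith
    then have r: "\<bar>realiz h v w (\<Theta> t) x - f x\<bar> \<le> Bt + V + F" using F(2)[OF x] by linarith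
    have "\<bar>(realiz h v w (\<Theta> t) x - f x) * p x\<bar> = \<bar>realiz h v w (\<Theta> t) x - f x\<bar> * \<bar>p x\<bar>" by (simp add: abs_mult)
    also have "\<dots> \<le> (Bt + V + F) * P" using r P(2)[OF x] by (intro mult_mono) auto
    finally show "\<bar>(realiz h v w (\<Theta> t) x - f x) * p x\<bar> \<le> M" unfolding M_def by linarith
  qed
  define K where "K = 2 * v k * M / w k"
  have K0: "K > 0" unfolding K_def using vk M0 wk by simp
  have mx: "2 * v k * M * max 0 (y / w k) = K * max 0 y" for y
    unfolding K_def using wk by (cases "y \<ge> 0") (auto simp: max_def field_simps)
  obtain \<sigma> c0 where sg: "\<sigma> = 1 \<or> \<sigma> = -1"
    and gb: "\<forall>t\<in>{0..t1}. \<bar>g t\<bar> \<le> K * max 0 (\<sigma> * z t + c0)"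
    and ps: "\<forall>t\<in>{0..<t1}. \<sigma> * z t + c0 > 0"
    and en: "\<sigma> * z t1 + c0 \<le> 0"
  proof (cases "z t1 \<le> lo")
    case True
    show ?thesis
    proof (rule that[of 1 "w k * b"])
      show "\<forall>t\<in>{0..t1}. \<bar>g t\<bar> \<le> K * max 0 (1 * z t + w k * b)"
        using grad_bound(1)[OF ab vw cf cp k Mb] mx unfolding g_def z_def by (simp add: add.commute)
      show "\<forall>t\<in>{0..<t1}. 1 * z t + w k * b > 0" using before unfolding lo_def by force
      show "1 * z t1 + w k * b \<le> 0" using True unfolding lo_def by simp
    qed simp
  next
    case False
    then have h1: "z t1 \<ge> hi" using t1out by auto
    show ?thesis
    proof (rule that[of "-1" "1 - w k * a"])
      show "\<forall>t\<in>{0..t1}. \<bar>g t\<bar> \<le> K * max 0 (-1 * z t + (1 - w k * a))"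
        using grad_bound(2)[OF ab vw cf cp k Mb] mx unfolding g_def z_def by simp
      show "\<forall>t\<in>{0..<t1}. -1 * z t + (1 - w k * a) > 0" using before unfolding hi_def by force
      show "-1 * z t1 + (1 - w k * a) \<le> 0" using h1 unfolding hi_def by simp
    qed simp
  qed
  define d where "d = (\<lambda>t. \<sigma> * z t + c0)"
  define G where "G = (\<lambda>t. \<sigma> * g t)"
  have intg: "g integrable_on {0..t1}" using gi[of t1] t1pos by auto
  have intG: "G integrable_on {0..t1}" unfolding G_def by (rule integrable_on_mult_right[OF intg])
  have cd: "continuous_on {0..t1} d" unfolding d_def
    by (intro continuous_intros continuous_on_subset[OF cz]) auto
  have dif: "\<forall>\<tau>\<in>{0..t1}. d \<tau> - d t1 \<le> integral {\<tau>..t1} G"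
  proof
    fix \<tau> assume tau: "\<tau> \<in> {0..t1}"
    have "integral {0..\<tau>} g + integral {\<tau>..t1} g = integral {0..t1} g"
      using Henstock_Kurzweil_Integration.integral_combine[where f=g and a=0 and c=\<tau> and b=t1] tau intg by auto
    moreover have "integral {0..\<tau>} g = z 0 - z \<tau>" using gi[of \<tau>] tau by (simp add: integral_unique)
    moreover have "integral {0..t1} g = z 0 - z t1" using gi[of t1] t1pos by (simp add: integral_unique)
    ultimately have "integral {\<tau>..t1} g = z \<tau> - z t1" by linarith
    then show "d \<tau> - d t1 \<le> integral {\<tau>..t1} G" unfolding G_def d_def by (simp add: right_diff_distrib)
  qed
  have Gb: "\<forall>s\<in>{0..t1}. G s \<le> K * max 0 (d s)"
  proof
    fix s assume s: "s \<in> {0..t1}"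
    have "G s \<le> \<bar>g s\<bar>" unfolding G_def using sg by auto
    then show "G s \<le> K * max 0 (d s)" using gb s unfolding d_def by force
  qed
  show False
    by (rule gronwall_contra[OF t1pos K0 cd _ _ intG dif Gb]) (use ps en in \<open>auto simp: d_def\<close>)
qed

end
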